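(* Fix $n\ge0$. For every formula $\phi\in\mathcal{L}^1$ and every label $w$, the computation of $\mathtt{Prove_n}(w:\phi)$ terminates.
   Context: Single-agent setting: $Ag=\{1\}$. Formulas $\phi ::= p \mid \overline{p} \mid (\phi\wedge\phi) \mid (\phi\vee\phi) \mid \Box\phi \mid \Diamond\phi \mid [1]\phi \mid \langle 1\rangle\phi$; $\overline{\phi}$ swaps $p/\overline{p}$, $\wedge/\vee$, $\Box/\Diamond$, $[1]/\langle 1\rangle$. A labelled sequent $\mathcal{R},\Gamma$ consists of relational atoms $\mathcal{R}_1xy$ and labelled formulas $x:\phi$. Graphs. $G(\Lambda)$ has the labels of $\Lambda$ as vertices and an edge $(x,y)$ for each $\mathcal{R}_1xy\in\Lambda$. A tree is a graph with a root having exactly one directed path to every other node; a forest is a disjoint union of trees. $\Lambda$ is forestlike iff $G(\Lambda)$ is a forest; its trees are choice-trees; $CT(w)$ is the choice-tree containing $w$. For forestlike $\Lambda$ and label $w$: $w$ is saturated iff (i) $w:\phi\in\Lambda$ implies $w:\overline{\phi}\notin\Lambda$, (ii) $w:\phi\vee\psi\in\Lambda$ implies $w:\phi,w:\psi\in\Lambda$, (iii) $w:\phi\wedge\psi\in\Lambda$ implies $w:\phi\in\Lambda$ or $w:\psi\in\Lambda$. $w$ is $\Box$-realized iff for each $w:\Box\phi\in\Lambda$ some label $u$ has $u:\phi\in\Lambda$; $[1]$-realized iff for each $w:[1]\phi\in\Lambda$ some $u\in CT(w)$ has $u:\phi\in\Lambda$; $\Diamond$-propagated iff for each $w:\Diamond\phi\in\Lambda$,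 $u:\phi\in\Lambda$ for all labels $u$; $\langle1\rangle$-propagated iff for each $w:\langle1\rangle\phi\in\Lambda$, $u:\phi\in\Lambda$ for all $u\in CT(w)$. $\Lambda$ is $n$-choice consistent ($n>0$) iff $G(\Lambda)$ has at most $n$ choice-trees. $\Lambda$ is stable iff all labels are saturated, $\Box$- and $[1]$-realized, $\Diamond$- and $\langle1\rangle$-propagated, and (when $n>0$) $\Lambda$ is $n$-choice consistent. Algorithm $\mathtt{Prove_n}(\mathcal{R},\Gamma)$, steps tried in order: 1. If $w:p$ and $w:\overline{p}$ are both present, return true. 2. If the sequent is stable, return false. 3. If some $w$ is not saturated: (i) if $w:\phi\vee\psi$ is present but $w:\phi$ or $w:\psi$ absent, return $\mathtt{Prove_n}(\mathcal{R},w:\phi,w:\psi,\Gamma)$; (ii) if $w:\phi\wedge\psi$ is present but neither $w:\phi$ nor $w:\psi$, return false if $\mathtt{Prove_n}(\mathcal{R},w:\phi,\Gamma)$ or $\mathtt{Prove_n}(\mathcal{R},w:\psi,\Gamma)$ returns false, else true. 4. If some $w:\langle1\rangle\phi$ is present and some $u\in CT(w)$ has $u:\phi$ absent, return $\mathtt{Prove_n}(\mathcal{R},u:\phi,\Gamma)$. 5. If some $w:\Diamond\phi$ is present and some label $u$ has $u:\phi$ absent, return $\mathtt{Prove_n}(\mathcal{R},u:\phi,\Gamma)$. 6. If some $w:[1]\phi$ is present with $u:\phi$ absent for all $u\in CT(w)$, return $\mathtt{Prove_n}(\mathcal{R},\mathcal{R}_1wv,v:\phi,\Gamma)$, $v$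 fresh. 7. If some $w:\Box\phi$ is present with $u:\phi$ absent for all labels $u$, return $\mathtt{Prove_n}(\mathcal{R},v:\phi,\Gamma)$, $v$ fresh. 8. (Only when $n>0$.) If not $n$-choice consistent, pick distinct choice-tree roots $w_0,\dots,w_n$ and return false if $\mathtt{Prove_n}(\mathcal{R},\mathcal{R}_1w_kw_j,\Gamma)$ returns false for some $0\le k\le n-1$, $k+1\le j\le n$, else true. For $n=0$ step 8 is absent and stability omits $n$-choice consistency. *)

theory Defs
  imports Main
begin

text \<open>Formulas of the single-agent language L^1 in negation normal form.
  Stit a = [1]a, DStit a = <1>a.\<close>
datatype 'a fm =
    Atom 'a | NAtom 'a
  | Conj "'a fm" "'a fm" | Disj "'a fm" "'a fm"
  | Box "'a fm" | Dia "'a fm"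
  | Stit "'a fm" | DStit "'a fm"

fun neg :: "'a fm \<Rightarrow> 'a fm" where
  "neg (Atom p) = NAtom p"
| "neg (NAtom p) = Atom p"
| "neg (Conj a b) = Disj (neg a) (neg b)"
| "neg (Disj a b) = Conj (neg a) (neg b)"
| "neg (Box a) = Dia (neg a)"
| "neg (Dia a) = Box (neg a)"
| "neg (Stit a) = DStit (neg a)"
| "neg (DStit a) = Stit (neg a)"

text \<open>Labels are natural numbers. A labelled sequent is a pair (R, G):
  R is the set of relational atoms R_1 x y (as pairs (x,y)), G the set of
  labelled formulas x:phi (as pairs (x,phi)).\<close>
type_synonym 'a sequent = "(nat \<times> nat) set \<times> (nat \<times> 'a fm) set"

definition labels :: "'a sequent \<Rightarrow> nat set" where
  "labels S = fst ` snd S \<union> fst ` fst S \<union> snd ` fst S"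

definition roots :: "'a sequent \<Rightarrow> nat set" where
  "roots S = {x \<in> labels S. \<not> (\<exists>y. (y, x) \<in> fst S)}"

definition CT :: "'a sequent \<Rightarrow> nat \<Rightarrow> nat set" where
  "CT S w = {u \<in> labels S. \<exists>r \<in> roots S. (r, w) \<in> (fst S)\<^sup>* \<and> (r, u) \<in> (fst S)\<^sup>*}"

definition forestlike :: "'a sequent \<Rightarrow> bool" where
  "forestlike S \<longleftrightarrow> (\<forall>u \<in> labels S. \<exists>!r. r \<in> roots S \<and>
      (\<exists>!p. p \<noteq> [] \<and> hd p = r \<and> last p = u \<and>
            (\<forall>i < length p - 1. (p ! i, p ! Suc i) \<in> fst S)))"

definition saturated :: "'a sequent \<Rightarrow> nat \<Rightarrow> bool" where
  "saturated S w \<longleftrightarrow>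
     (\<forall>\<phi>. (w, \<phi>) \<in> snd S \<longrightarrow> (w, neg \<phi>) \<notin> snd S) \<and>
     (\<forall>\<phi> \<psi>. (w, Disj \<phi> \<psi>) \<in> snd S \<longrightarrow> (w, \<phi>) \<in> snd S \<and> (w, \<psi>) \<in> snd S) \<and>
     (\<forall>\<phi> \<psi>. (w, Conj \<phi> \<psi>) \<in> snd S \<longrightarrow> (w, \<phi>) \<in> snd S \<or> (w, \<psi>) \<in> snd S)"

definition box_realized :: "'a sequent \<Rightarrow> nat \<Rightarrow> bool" where
  "box_realized S w \<longleftrightarrow>
     (\<forall>\<phi>. (w, Box \<phi>) \<in> snd S \<longrightarrow> (\<exists>u \<in> labels S. (u, \<phi>) \<in> snd S))"

definition stit_realized :: "'a sequent \<Rightarrow> nat \<Rightarrow> bool" where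
  "stit_realized S w \<longleftrightarrow>
     (\<forall>\<phi>. (w, Stit \<phi>) \<in> snd S \<longrightarrow> (\<exists>u \<in> CT S w. (u, \<phi>) \<in> snd S))"

definition dia_propagated :: "'a sequent \<Rightarrow> nat \<Rightarrow> bool" where
  "dia_propagated S w \<longleftrightarrow>
     (\<forall>\<phi>. (w, Dia \<phi>) \<in> snd S \<longrightarrow> (\<forall>u \<in> labels S. (u, \<phi>) \<in> snd S))"

definition dstit_propagated :: "'a sequent \<Rightarrow> nat \<Rightarrow> bool" where
  "dstit_propagated S w \<longleftrightarrow>
     (\<forall>\<phi>. (w, DStit \<phi>) \<in> snd S \<longrightarrow> (\<forall>u \<in> CT S w. (u, \<phi>) \<in> snd S))"

definition choice_consistent :: "nat \<Rightarrow> 'a sequent \<Rightarrow> bool" where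
  "choice_consistent n S \<longleftrightarrow> card (roots S) \<le> n"

definition stable :: "nat \<Rightarrow> 'a sequent \<Rightarrow> bool" where
  "stable n S \<longleftrightarrow>
     (\<forall>w \<in> labels S. saturated S w \<and> box_realized S w \<and> stit_realized S w \<and>
                     dia_propagated S w \<and> dstit_propagated S w) \<and>
     (n > 0 \<longrightarrow> choice_consistent n S)"

definition closed :: "'a sequent \<Rightarrow> bool" where
  "closed S \<longleftrightarrow> (\<exists>w p. (w, Atom p) \<in> snd S \<and> (w, NAtom p) \<in> snd S)"

definition step3_cond :: "'a sequent \<Rightarrow> bool" where
  "step3_cond S \<longleftrightarrow>
     (\<exists>w \<phi> \<psi>. (w, Disj \<phi> \<psi>) \<in> snd S \<and> ((w, \<phi>) \<notin> snd S \<or> (w, \<psi>) \<notin> snd S)) \<or>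
     (\<exists>w \<phi> \<psi>. (w, Conj \<phi> \<psi>) \<in> snd S \<and> (w, \<phi>) \<notin> snd S \<and> (w, \<psi>) \<notin> snd S)"

definition step4_cond :: "'a sequent \<Rightarrow> bool" where
  "step4_cond S \<longleftrightarrow> (\<exists>w \<phi>. (w, DStit \<phi>) \<in> snd S \<and> (\<exists>u \<in> CT S w. (u, \<phi>) \<notin> snd S))"

definition step5_cond :: "'a sequent \<Rightarrow> bool" where
  "step5_cond S \<longleftrightarrow> (\<exists>w \<phi>. (w, Dia \<phi>) \<in> snd S \<and> (\<exists>u \<in> labels S. (u, \<phi>) \<notin> snd S))"

definition step6_cond :: "'a sequent \<Rightarrow> bool" where
  "step6_cond S \<longleftrightarrow> (\<exists>w \<phi>. (w, Stit \<phi>) \<in> snd S \<and> (\<forall>u \<in> CT S w. (u, \<phi>) \<notin> snd S))"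

definition step7_cond :: "'a sequent \<Rightarrow> bool" where
  "step7_cond S \<longleftrightarrow> (\<exists>w \<phi>. (w, Box \<phi>) \<in> snd S \<and> (\<forall>u \<in> labels S. (u, \<phi>) \<notin> snd S))"

text \<open>prove_call n S S': the computation of Prove_n(S) makes a recursive call
  Prove_n(S') (for some admissible choice of labels / formulas / fresh labels,
  steps tried in order).\<close>
inductive prove_call :: "nat \<Rightarrow> 'a sequent \<Rightarrow> 'a sequent \<Rightarrow> bool" for n where
  step3_disj: "\<lbrakk>\<not> closed (R, G); \<not> stable n (R, G);
     (w, Disj \<phi> \<psi>) \<in> G; (w, \<phi>) \<notin> G \<or> (w, \<psi>) \<notin> G\<rbrakk>
   \<Longrightarrow> prove_call n (R, G) (R, insert (w, \<phi>) (insert (w, \<psi>) G))"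
| step3_conj1: "\<lbrakk>\<not> closed (R, G); \<not> stable n (R, G);
     (w, Conj \<phi> \<psi>) \<in> G; (w, \<phi>) \<notin> G; (w, \<psi>) \<notin> G\<rbrakk>
   \<Longrightarrow> prove_call n (R, G) (R, insert (w, \<phi>) G)"
| step3_conj2: "\<lbrakk>\<not> closed (R, G); \<not> stable n (R, G);
     (w, Conj \<phi> \<psi>) \<in> G; (w, \<phi>) \<notin> G; (w, \<psi>) \<notin> G\<rbrakk>
   \<Longrightarrow> prove_call n (R, G) (R, insert (w, \<psi>) G)"
| step4: "\<lbrakk>\<not> closed (R, G); \<not> stable n (R, G); \<not> step3_cond (R, G);
     (w, DStit \<phi>) \<in> G; u \<in> CT (R, G) w; (u, \<phi>) \<notin> G\<rbrakk>
   \<Longrightarrow> prove_call n (R, G) (R, insert (u, \<phi>) G)"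
| step5: "\<lbrakk>\<not> closed (R, G); \<not> stable n (R, G); \<not> step3_cond (R, G);
     \<not> step4_cond (R, G);
     (w, Dia \<phi>) \<in> G; u \<in> labels (R, G); (u, \<phi>) \<notin> G\<rbrakk>
   \<Longrightarrow> prove_call n (R, G) (R, insert (u, \<phi>) G)"
| step6: "\<lbrakk>\<not> closed (R, G); \<not> stable n (R, G); \<not> step3_cond (R, G);
     \<not> step4_cond (R, G); \<not> step5_cond (R, G);
     (w, Stit \<phi>) \<in> G; \<forall>u \<in> CT (R, G) w. (u, \<phi>) \<notin> G; v \<notin> labels (R, G)\<rbrakk>
   \<Longrightarrow> prove_call n (R, G) (insert (w, v) R, insert (v, \<phi>) G)"
| step7: "\<lbrakk>\<not> closed (R, G); \<not> stable n (R, G); \<not> step3_cond (R, G);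
     \<not> step4_cond (R, G); \<not> step5_cond (R, G); \<not> step6_cond (R, G);
     (w, Box \<phi>) \<in> G; \<forall>u \<in> labels (R, G). (u, \<phi>) \<notin> G; v \<notin> labels (R, G)\<rbrakk>
   \<Longrightarrow> prove_call n (R, G) (R, insert (v, \<phi>) G)"
| step8: "\<lbrakk>n > 0; \<not> closed (R, G); \<not> stable n (R, G); \<not> step3_cond (R, G);
     \<not> step4_cond (R, G); \<not> step5_cond (R, G); \<not> step6_cond (R, G);
     \<not> step7_cond (R, G); \<not> choice_consistent n (R, G);
     inj_on r {0..n}; r ` {0..n} \<subseteq> roots (R, G); k \<le> n - 1; k + 1 \<le> j; j \<le> n\<rbrakk>
   \<Longrightarrow> prove_call n (R, G) (insert (r k, r j) R, G)"

end

theory Submission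
  imports Defs
begin

fun subs :: "'a fm \<Rightarrow> 'a fm set" where
  "subs (Atom p) = {Atom p}"
| "subs (NAtom p) = {NAtom p}"
| "subs (Conj a b) = insert (Conj a b) (subs a \<union> subs b)"
| "subs (Disj a b) = insert (Disj a b) (subs a \<union> subs b)"
| "subs (Box a) = insert (Box a) (subs a)"
| "subs (Dia a) = insert (Dia a) (subs a)"
| "subs (Stit a) = insert (Stit a) (subs a)"
| "subs (DStit a) = insert (DStit a) (subs a)"

lemma finite_subs: "finite (subs \<phi>)"
  by (induct \<phi>) auto

lemma self_subs: "\<phi> \<in> subs \<phi>"
  by (cases \<phi>) auto

lemma subs_trans: "\<chi> \<in> subs \<phi> \<Longrightarrow> subs \<chi> \<subseteq> subs \<phi>"
  by (induct \<phi>) auto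

lemma subs_cl:
  "Conj a b \<in> subs \<phi> \<Longrightarrow> a \<in> subs \<phi> \<and> b \<in> subs \<phi>"
  "Disj a b \<in> subs \<phi> \<Longrightarrow> a \<in> subs \<phi> \<and> b \<in> subs \<phi>"
  "Box a \<in> subs \<phi> \<Longrightarrow> a \<in> subs \<phi>"
  "Dia a \<in> subs \<phi> \<Longrightarrow> a \<in> subs \<phi>"
  "Stit a \<in> subs \<phi> \<Longrightarrow> a \<in> subs \<phi>"
  "DStit a \<in> subs \<phi> \<Longrightarrow> a \<in> subs \<phi>"
  using subs_trans self_subs by fastforce+

definition invar :: "'a fm \<Rightarrow> 'a sequent \<Rightarrow> bool" where
  "invar \<phi> S \<longleftrightarrow> finite (fst S) \<and> finite (snd S) \<and> snd ` snd S \<subseteq> subs \<phi> \<and>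
     (\<forall>u \<in> labels S. \<exists>r \<in> roots S. (r, u) \<in> (fst S)\<^sup>*)"

definition m7 :: "'a fm \<Rightarrow> 'a sequent \<Rightarrow> nat" where
  "m7 \<phi> S = card {\<chi> \<in> subs \<phi>. \<forall>u \<in> labels S. (u, \<chi>) \<notin> snd S}"

definition mr :: "'a sequent \<Rightarrow> nat" where
  "mr S = card (roots S)"

definition m6 :: "'a fm \<Rightarrow> 'a sequent \<Rightarrow> nat" where
  "m6 \<phi> S = card {(r, \<chi>). r \<in> roots S \<and> \<chi> \<in> subs \<phi> \<and>
      \<not> (\<exists>u. (r, u) \<in> (fst S)\<^sup>* \<and> (u, \<chi>) \<in> snd S)}"

definition m5 :: "'a fm \<Rightarrow> 'a sequent \<Rightarrow> nat" where
  "m5 \<phi> S = card {(u, \<chi>). u \<in> labels S \<and> \<chi> \<in> subs \<phi> \<and> (u, \<chi>) \<notin> snd S}"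

abbreviation meas where "meas \<phi> \<equiv> measures [m7 \<phi>, mr, m6 \<phi>, m5 \<phi>]"

lemma labels_eq: "labels (R, G) = fst ` G \<union> fst ` R \<union> snd ` R"
  by (simp add: labels_def)

lemma finite_labels: "finite R \<Longrightarrow> finite G \<Longrightarrow> finite (labels (R, G))"
  by (simp add: labels_eq)

lemma roots_sub: "roots S \<subseteq> labels S"
  by (auto simp: roots_def)

lemma inv_sub: "invar \<phi> (R, G) \<Longrightarrow> (u, \<chi>) \<in> G \<Longrightarrow> \<chi> \<in> subs \<phi>"
  unfolding invar_def by force

lemma inv_reach: "invar \<phi> (R, G) \<Longrightarrow> u \<in> labels (R, G) \<Longrightarrow> \<exists>r \<in> roots (R, G). (r, u) \<in> R\<^sup>*"
  unfolding invar_def by simp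

lemma in_labels: "(u, \<chi>) \<in> G \<Longrightarrow> u \<in> labels (R, G)"
  unfolding labels_eq by force

lemma grow_G:
  assumes inv: "invar \<phi> (R, G)" and ps: "G \<subset> G'"
    and new: "\<forall>(u, \<chi>) \<in> G' - G. u \<in> labels (R, G) \<and> \<chi> \<in> subs \<phi>"
    and fin: "finite G'"
  shows "invar \<phi> (R, G') \<and> ((R, G'), (R, G)) \<in> meas \<phi>"
proof -
  have L: "labels (R, G') = labels (R, G)"
    using ps new unfolding labels_eq by force
  have Rt: "roots (R, G') = roots (R, G)"
    unfolding roots_def L by simp
  have finL: "finite (labels (R, G))" using inv finite_labels by (auto simp: invar_def)
  have finR: "finite (roots (R, G))" using finL roots_sub finite_subset by blast
  have i: "invar \<phi> (R, G')"
    using inv ps new fin unfolding invar_def L Rt by fastforce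
  have a: "m7 \<phi> (R, G') \<le> m7 \<phi> (R, G)"
    unfolding m7_def L using ps by (intro card_mono) (auto simp: finite_subs)
  have b: "mr (R, G') = mr (R, G)" by (simp add: mr_def Rt)
  have c: "m6 \<phi> (R, G') \<le> m6 \<phi> (R, G)"
    unfolding m6_def Rt
    apply (rule card_mono)
     apply (rule finite_subset[of _ "roots (R, G) \<times> subs \<phi>"])
      apply blast
     apply (simp add: finR finite_subs)
    using ps by auto
  obtain u \<chi> where uc: "(u, \<chi>) \<in> G'" "(u, \<chi>) \<notin> G" using ps by auto
  have uc2: "u \<in> labels (R, G)" "\<chi> \<in> subs \<phi>" using new uc by auto
  have d: "m5 \<phi> (R, G') < m5 \<phi> (R, G)"
    unfolding m5_def L
    apply (rule psubset_card_mono)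
     apply (rule finite_subset[of _ "labels (R, G) \<times> subs \<phi>"])
      apply blast
     apply (simp add: finL finite_subs)
    using ps uc uc2 by (auto simp: psubset_eq)
  show ?thesis using i a b c d by auto
qed

lemma step6_lem:
  assumes inv: "invar \<phi> (R, G)" and wS: "(w, Stit \<psi>) \<in> G"
    and none: "\<forall>u \<in> CT (R, G) w. (u, \<psi>) \<notin> G" and v: "v \<notin> labels (R, G)"
  shows "invar \<phi> (insert (w, v) R, insert (v, \<psi>) G) \<and>
     ((insert (w, v) R, insert (v, \<psi>) G), (R, G)) \<in> meas \<phi>"
proof -
  let ?S = "(insert (w, v) R, insert (v, \<psi>) G)"
  have wl: "w \<in> labels (R, G)" using wS by (force simp: labels_eq)
  have L: "labels ?S = insert v (labels (R, G))"
    using wl unfolding labels_eq by force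
  have Rt: "roots ?S = roots (R, G)"
    using v unfolding roots_def L by (auto simp: labels_eq)
  have finL: "finite (labels (R, G))" using inv finite_labels by (auto simp: invar_def)
  have finR: "finite (roots (R, G))" using finL roots_sub finite_subset by blast
  have psi: "\<psi> \<in> subs \<phi>" using inv_sub[OF inv wS] subs_cl by blast
  have mono: "R\<^sup>* \<subseteq> (insert (w, v) R)\<^sup>*" by (rule rtrancl_mono) auto
  obtain r0 where r0: "r0 \<in> roots (R, G)" "(r0, w) \<in> R\<^sup>*"
    using inv wl by (auto simp: invar_def)
  have r0v: "(r0, v) \<in> (insert (w, v) R)\<^sup>*"
    using r0(2) mono by (meson insertI1 rtrancl.rtrancl_into_rtrancl subsetD)
  have i: "invar \<phi> ?S"
    unfolding invar_def
  proof (intro conjI)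
    show "finite (fst ?S)" "finite (snd ?S)" using inv by (auto simp: invar_def)
    show "snd ` snd ?S \<subseteq> subs \<phi>" using inv psi by (auto simp: invar_def)
    show "\<forall>u\<in>labels ?S. \<exists>r\<in>roots ?S. (r, u) \<in> (fst ?S)\<^sup>*"
    proof
      fix u assume "u \<in> labels ?S"
      hence "u = v \<or> u \<in> labels (R, G)" using L by simp
      thus "\<exists>r\<in>roots ?S. (r, u) \<in> (fst ?S)\<^sup>*"
      proof
        assume "u = v" thus ?thesis using r0 r0v Rt by auto
      next
        assume "u \<in> labels (R, G)"
        then obtain r where "r \<in> roots (R, G)" "(r, u) \<in> R\<^sup>*" using inv_reach[OF inv] by blast
        thus ?thesis using Rt mono by auto
      qed
    qed
  qed
  have a: "m7 \<phi> ?S \<le> m7 \<phi> (R, G)"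
    unfolding m7_def L by (intro card_mono) (auto simp: finite_subs)
  have b: "mr ?S = mr (R, G)" by (simp add: mr_def Rt)
  have c: "m6 \<phi> ?S < m6 \<phi> (R, G)"
    unfolding m6_def Rt
  proof (rule psubset_card_mono)
    show "finite {(r, \<chi>). r \<in> roots (R, G) \<and> \<chi> \<in> subs \<phi> \<and> \<not> (\<exists>u. (r, u) \<in> (fst (R, G))\<^sup>* \<and> (u, \<chi>) \<in> snd (R, G))}"
      apply (rule finite_subset[of _ "roots (R, G) \<times> subs \<phi>"])
       apply blast
      by (simp add: finR finite_subs)
    have old: "(r0, \<psi>) \<in> {(r, \<chi>). r \<in> roots (R, G) \<and> \<chi> \<in> subs \<phi> \<and> \<not> (\<exists>u. (r, u) \<in> (fst (R, G))\<^sup>* \<and> (u, \<chi>) \<in> snd (R, G))}"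
    proof -
      have "\<not> (\<exists>u. (r0, u) \<in> R\<^sup>* \<and> (u, \<psi>) \<in> G)"
      proof
        assume "\<exists>u. (r0, u) \<in> R\<^sup>* \<and> (u, \<psi>) \<in> G"
        then obtain u where u: "(r0, u) \<in> R\<^sup>*" "(u, \<psi>) \<in> G" by blast
        have "u \<in> labels (R, G)" using u(2) by (force simp: labels_eq)
        hence "u \<in> CT (R, G) w" using r0 u(1) by (auto simp: CT_def)
        thus False using none u(2) by blast
      qed
      thus ?thesis using r0 psi by auto
    qed
    have new: "(r0, \<psi>) \<notin> {(r, \<chi>). r \<in> roots (R, G) \<and> \<chi> \<in> subs \<phi> \<and> \<not> (\<exists>u. (r, u) \<in> (fst ?S)\<^sup>* \<and> (u, \<chi>) \<in> snd ?S)}"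
      using r0v by auto
    show "{(r, \<chi>). r \<in> roots (R, G) \<and> \<chi> \<in> subs \<phi> \<and> \<not> (\<exists>u. (r, u) \<in> (fst ?S)\<^sup>* \<and> (u, \<chi>) \<in> snd ?S)}
        \<subset> {(r, \<chi>). r \<in> roots (R, G) \<and> \<chi> \<in> subs \<phi> \<and> \<not> (\<exists>u. (r, u) \<in> (fst (R, G))\<^sup>* \<and> (u, \<chi>) \<in> snd (R, G))}"
    proof (rule psubsetI)
      show "{(r, \<chi>). r \<in> roots (R, G) \<and> \<chi> \<in> subs \<phi> \<and> \<not> (\<exists>u. (r, u) \<in> (fst ?S)\<^sup>* \<and> (u, \<chi>) \<in> snd ?S)}
        \<subseteq> {(r, \<chi>). r \<in> roots (R, G) \<and> \<chi> \<in> subs \<phi> \<and> \<not> (\<exists>u. (r, u) \<in> (fst (R, G))\<^sup>* \<and> (u, \<chi>) \<in> snd (R, G))}"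
        using mono by auto
      show "{(r, \<chi>). r \<in> roots (R, G) \<and> \<chi> \<in> subs \<phi> \<and> \<not> (\<exists>u. (r, u) \<in> (fst ?S)\<^sup>* \<and> (u, \<chi>) \<in> snd ?S)}
        \<noteq> {(r, \<chi>). r \<in> roots (R, G) \<and> \<chi> \<in> subs \<phi> \<and> \<not> (\<exists>u. (r, u) \<in> (fst (R, G))\<^sup>* \<and> (u, \<chi>) \<in> snd (R, G))}"
        using old new by blast
    qed
  qed
  show ?thesis using i a b c by auto
qed

lemma step7_lem:
  assumes inv: "invar \<phi> (R, G)" and wS: "(w, Box \<psi>) \<in> G"
    and none: "\<forall>u \<in> labels (R, G). (u, \<psi>) \<notin> G" and v: "v \<notin> labels (R, G)"
  shows "invar \<phi> (R, insert (v, \<psi>) G) \<and>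
     ((R, insert (v, \<psi>) G), (R, G)) \<in> meas \<phi>"
proof -
  let ?S = "(R, insert (v, \<psi>) G)"
  have L: "labels ?S = insert v (labels (R, G))"
    unfolding labels_eq by force
  have Rt: "roots ?S = insert v (roots (R, G))"
    using v unfolding roots_def L by (force simp: labels_eq)
  have psi: "\<psi> \<in> subs \<phi>" using inv_sub[OF inv wS] subs_cl by blast
  have i: "invar \<phi> ?S"
    unfolding invar_def
  proof (intro conjI)
    show "finite (fst ?S)" "finite (snd ?S)" using inv by (auto simp: invar_def)
    show "snd ` snd ?S \<subseteq> subs \<phi>" using inv psi by (auto simp: invar_def)
    show "\<forall>u\<in>labels ?S. \<exists>r\<in>roots ?S. (r, u) \<in> (fst ?S)\<^sup>*"
    proof
      fix u assume "u \<in> labels ?S"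
      hence "u = v \<or> u \<in> labels (R, G)" using L by simp
      thus "\<exists>r\<in>roots ?S. (r, u) \<in> (fst ?S)\<^sup>*"
      proof
        assume "u = v" thus ?thesis using Rt by auto
      next
        assume "u \<in> labels (R, G)"
        then obtain r where "r \<in> roots (R, G)" "(r, u) \<in> R\<^sup>*" using inv_reach[OF inv] by blast
        thus ?thesis using Rt by auto
      qed
    qed
  qed
  have a: "m7 \<phi> ?S < m7 \<phi> (R, G)"
    unfolding m7_def L
    apply (rule psubset_card_mono)
     apply (simp add: finite_subs)
    using psi none by auto
  show ?thesis using i a by auto
qed

lemma step8_lem:
  assumes inv: "invar \<phi> (R, G)" and ab: "a \<noteq> b" "a \<in> roots (R, G)" "b \<in> roots (R, G)"
  shows "invar \<phi> (insert (a, b) R, G) \<and> ((insert (a, b) R, G), (R, G)) \<in> meas \<phi>"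
proof -
  let ?S = "(insert (a, b) R, G)"
  have al: "a \<in> labels (R, G)" "b \<in> labels (R, G)" using ab roots_sub by auto
  have L: "labels ?S = labels (R, G)"
    using al unfolding labels_eq by force
  have Rt: "roots ?S = roots (R, G) - {b}"
    unfolding roots_def L by auto
  have finL: "finite (labels (R, G))" using inv finite_labels by (auto simp: invar_def)
  have finR: "finite (roots (R, G))" using finL roots_sub finite_subset by blast
  have mono: "R\<^sup>* \<subseteq> (insert (a, b) R)\<^sup>*" by (rule rtrancl_mono) auto
  have i: "invar \<phi> ?S"
    unfolding invar_def
  proof (intro conjI)
    show "finite (fst ?S)" "finite (snd ?S)" using inv by (auto simp: invar_def)
    show "snd ` snd ?S \<subseteq> subs \<phi>" using inv by (auto simp: invar_def)
    show "\<forall>u\<in>labels ?S. \<exists>r\<in>roots ?S. (r, u) \<in> (fst ?S)\<^sup>*"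
    proof
      fix u assume "u \<in> labels ?S"
      then obtain r where r: "r \<in> roots (R, G)" "(r, u) \<in> R\<^sup>*"
        using inv L by (auto simp: invar_def)
      show "\<exists>r\<in>roots ?S. (r, u) \<in> (fst ?S)\<^sup>*"
      proof (cases "r = b")
        case True
        have "(a, u) \<in> (insert (a, b) R)\<^sup>*"
          using r(2) mono True by (meson converse_rtrancl_into_rtrancl insertI1 subsetD)
        thus ?thesis using Rt ab by auto
      next
        case False
        thus ?thesis using Rt r mono by auto
      qed
    qed
  qed
  have a: "m7 \<phi> ?S = m7 \<phi> (R, G)" unfolding m7_def L by simp
  have b: "mr ?S < mr (R, G)" unfolding mr_def Rt
    by (rule card_Diff1_less[OF finR ab(3)])
  show ?thesis using i a b by auto
qed

lemma main_step:
  assumes "prove_call n S S'" "invar \<phi> S"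
  shows "invar \<phi> S' \<and> (S', S) \<in> meas \<phi>"
  using assms
proof (cases rule: prove_call.cases)
  case (step3_disj R G w \<phi>' \<psi>)
  have wl: "w \<in> labels (R, G)" using step3_disj by (force simp: labels_eq)
  have sb: "\<phi>' \<in> subs \<phi> \<and> \<psi> \<in> subs \<phi>" using inv_sub[OF assms(2)[unfolded step3_disj(1)] step3_disj(5)] subs_cl by blast
  show ?thesis
  proof -
    have inv: "invar \<phi> (R, G)" using assms(2) step3_disj(1) by simp
    have "invar \<phi> (R, insert (w, \<phi>') (insert (w, \<psi>) G)) \<and> ((R, insert (w, \<phi>') (insert (w, \<psi>) G)), (R, G)) \<in> meas \<phi>"
      apply (rule grow_G[OF inv])
      using step3_disj wl sb inv by (auto simp: invar_def)
    then show ?thesis using step3_disj(1,2) by simp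
  qed
next
  case (step3_conj1 R G w \<phi>' \<psi>)
  have wl: "w \<in> labels (R, G)" using step3_conj1 by (force simp: labels_eq)
  have sb: "\<phi>' \<in> subs \<phi> \<and> \<psi> \<in> subs \<phi>" using inv_sub[OF assms(2)[unfolded step3_conj1(1)] step3_conj1(5)] subs_cl by blast
  show ?thesis
  proof -
    have inv: "invar \<phi> (R, G)" using assms(2) step3_conj1(1) by simp
    have "invar \<phi> (R, insert (w, \<phi>') G) \<and> ((R, insert (w, \<phi>') G), (R, G)) \<in> meas \<phi>"
      apply (rule grow_G[OF inv])
      using step3_conj1 wl sb inv by (auto simp: invar_def)
    then show ?thesis using step3_conj1(1,2) by simp
  qed
next
  case (step3_conj2 R G w \<phi>' \<psi>)
  have wl: "w \<in> labels (R, G)" using step3_conj2 by (force simp: labels_eq)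
  have sb: "\<phi>' \<in> subs \<phi> \<and> \<psi> \<in> subs \<phi>" using inv_sub[OF assms(2)[unfolded step3_conj2(1)] step3_conj2(5)] subs_cl by blast
  show ?thesis
  proof -
    have inv: "invar \<phi> (R, G)" using assms(2) step3_conj2(1) by simp
    have "invar \<phi> (R, insert (w, \<psi>) G) \<and> ((R, insert (w, \<psi>) G), (R, G)) \<in> meas \<phi>"
      apply (rule grow_G[OF inv])
      using step3_conj2 wl sb inv by (auto simp: invar_def)
    then show ?thesis using step3_conj2(1,2) by simp
  qed
next
  case (step4 R G w \<phi>' u)
  have wl: "u \<in> labels (R, G)" using step4 by (auto simp: CT_def)
  have sb: "\<phi>' \<in> subs \<phi>" using inv_sub[OF assms(2)[unfolded step4(1)] step4(6)] subs_cl by blast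
  show ?thesis
  proof -
    have inv: "invar \<phi> (R, G)" using assms(2) step4(1) by simp
    have "invar \<phi> (R, insert (u, \<phi>') G) \<and> ((R, insert (u, \<phi>') G), (R, G)) \<in> meas \<phi>"
      apply (rule grow_G[OF inv])
      using step4 wl sb inv by (auto simp: invar_def)
    then show ?thesis using step4(1,2) by simp
  qed
next
  case (step5 R G w \<phi>' u)
  have sb: "\<phi>' \<in> subs \<phi>" using inv_sub[OF assms(2)[unfolded step5(1)] step5(7)] subs_cl by blast
  have wl: "u \<in> labels (R, G)" using step5 by simp
  show ?thesis
  proof -
    have inv: "invar \<phi> (R, G)" using assms(2) step5(1) by simp
    have "invar \<phi> (R, insert (u, \<phi>') G) \<and> ((R, insert (u, \<phi>') G), (R, G)) \<in> meas \<phi>"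
      apply (rule grow_G[OF inv])
      using step5 wl sb inv by (auto simp: invar_def)
    then show ?thesis using step5(1,2) by simp
  qed
next
  case (step6 R G w \<phi>' v)
  then show ?thesis using step6_lem[of \<phi> R G w \<phi>' v] assms(2) by simp
next
  case (step7 R G w \<phi>' v)
  then show ?thesis using step7_lem[of \<phi> R G w \<phi>' v] assms(2) by simp
next
  case (step8 R G r k j)
  have "k \<in> {0..n}" "j \<in> {0..n}" "k \<noteq> j" using step8 by auto
  hence "r k \<noteq> r j" using step8 by (meson inj_on_contraD)
  moreover have "r k \<in> roots (R, G)" "r j \<in> roots (R, G)"
    using step8 \<open>k \<in> {0..n}\<close> \<open>j \<in> {0..n}\<close> by (meson image_subset_iff)+
  ultimately show ?thesis using step8_lem[of \<phi> R G "r k" "r j"] assms(2) step8(1,2) by simp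
qed

theorem theorem6:
  fixes n :: nat and w :: nat and \<phi> :: "'a fm"
  shows "\<not> (\<exists>f :: nat \<Rightarrow> 'a sequent.
              f 0 = ({}, {(w, \<phi>)}) \<and> (\<forall>i. prove_call n (f i) (f (Suc i))))"
proof
  assume "\<exists>f :: nat \<Rightarrow> 'a sequent.
              f 0 = ({}, {(w, \<phi>)}) \<and> (\<forall>i. prove_call n (f i) (f (Suc i)))"
  then obtain f :: "nat \<Rightarrow> 'a sequent" where f0: "f 0 = ({}, {(w, \<phi>)})"
    and fs: "\<forall>i. prove_call n (f i) (f (Suc i))" by blast
  have i0: "invar \<phi> (f 0)"
    unfolding f0 invar_def by (auto simp: labels_eq roots_def self_subs)
  have I: "invar \<phi> (f i)" for i
    by (induct i) (use i0 fs main_step in blast)+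
  have "\<forall>i. (f (Suc i), f i) \<in> meas \<phi>"
    using I fs main_step by blast
  moreover have "wf (meas \<phi>)" by simp
  ultimately show False using wf_iff_no_infinite_down_chain by blast
qed

end
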